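(* Let $K\subset\mathbb R^n$ be a convex body with $0$ in its interior, and let $N=N(K,B_2^n)$. Then for every $\varepsilon\in(0,1)$, \[ \sigma\left(\left\{\theta\in S^{n-1}:\rho_K(\theta)\le\frac{1}{\sqrt{1-\varepsilon^2}}\right\}\right)\ge 1-2e^{\log N-\frac12 n\varepsilon^2}. \]
   Context: A convex body is a compact convex set with nonempty interior. $B_2^n$ is the closed Euclidean unit ball, $S^{n-1}$ the unit sphere, and $\sigma$ the unique rotation-invariant probability measure on $S^{n-1}$. The covering number is $N(K,T)=\min\{N:\exists x_1,\dots,x_N\in\mathbb R^n,\ K\subset\bigcup_{i=1}^N(x_i+T)\}$. The radial function is $\rho_K(\theta)=\sup\{t\ge0:t\theta\in K\}$ for $\theta\in S^{n-1}$. *)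

theory Defs
  imports "HOL-Analysis.Analysis"
begin

definition covering_number :: "'a::real_vector set \<Rightarrow> 'a set \<Rightarrow> nat" where
  "covering_number K T =
     (LEAST N. \<exists>X. finite X \<and> card X = N \<and> K \<subseteq> (\<Union>x\<in>X. (\<lambda>y. x + y) ` T))"

definition radial_fn :: "'a::real_vector set \<Rightarrow> 'a \<Rightarrow> real" where
  "radial_fn K \<theta> = Sup {t. 0 \<le> t \<and> t *\<^sub>R \<theta> \<in> K}"

text \<open>Normalized rotation-invariant (surface) probability measure on the unit sphere,
  realized as the normalized cone measure: sigma(A) = vol{t theta : 0 < t <= 1, theta in A} / vol(B).\<close>
definition sphere_measure :: "'a::euclidean_space set \<Rightarrow> real" where
  "sphere_measure A =
     measure lebesgue {t *\<^sub>R \<theta> | t \<theta>. 0 < t \<and> t \<le> 1 \<and> \<theta> \<in> A \<inter> sphere 0 1}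
       / measure lebesgue (cball (0::'a) 1)"

end

theory Submission
  imports Defs
begin

lemma cap_ineq:
  fixes \<theta> x :: "'a::euclidean_space"
  assumes th: "norm \<theta> = 1" and e: "0 < \<epsilon>" "\<epsilon> < 1" and t: "t > 1 / sqrt (1 - \<epsilon>\<^sup>2)"
    and d: "norm (t *\<^sub>R \<theta> - x) \<le> 1"
  shows "x \<noteq> 0 \<and> \<epsilon> * norm x \<le> \<theta> \<bullet> x"
proof -
  have q: "0 < 1 - \<epsilon>\<^sup>2" proof -
    have "\<epsilon> * \<epsilon> < 1 * 1" using e by (intro mult_strict_mono) auto
    thus ?thesis by (simp add: power2_eq_square)
  qed
  have sq: "0 < sqrt (1 - \<epsilon>\<^sup>2)" using q by simp
  have t0: "t > 0" using t sq by (meson divide_pos_pos less_trans zero_less_one)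
  have "t * sqrt (1 - \<epsilon>\<^sup>2) > 1" using t sq by (simp add: field_simps)
  hence "(t * sqrt (1 - \<epsilon>\<^sup>2))^2 > 1^2" using t0 sq
    by (intro power_strict_mono) auto
  hence tt: "t^2 * (1 - \<epsilon>\<^sup>2) > 1" using q by (simp add: power_mult_distrib)
  have sq1: "sqrt (1 - \<epsilon>\<^sup>2) \<le> 1" using e by simp
  have t1: "t > 1" using t sq sq1
    by (smt (verit) le_divide_eq_1_pos)
  have "(norm (t *\<^sub>R \<theta> - x))^2 \<le> 1" using d by (simp add: power_le_one)
  moreover have "(norm (t *\<^sub>R \<theta> - x))^2 = t^2 - 2 * t * (\<theta> \<bullet> x) + (norm x)^2"
  proof -
    have tht: "\<theta> \<bullet> \<theta> = 1" using th by (metis power2_norm_eq_inner one_power2)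
    show ?thesis unfolding power2_norm_eq_inner
      by (simp add: inner_diff_left inner_diff_right inner_commute tht power2_eq_square algebra_simps)
  qed
  ultimately have h: "2 * t * (\<theta> \<bullet> x) \<ge> t^2 - 1 + (norm x)^2" by linarith
  have x0: "x \<noteq> 0"
  proof
    assume "x = 0" then show False using d t1 th by simp
  qed
  have "2 * (\<epsilon> * t) * norm x \<le> (\<epsilon> * t)^2 + (norm x)^2"
    proof -
    have "0 \<le> (\<epsilon> * t - norm x)^2" by simp
    thus ?thesis by (simp add: power2_diff algebra_simps)
  qed
  also have "\<dots> \<le> t^2 - 1 + (norm x)^2" using tt by (simp add: power_mult_distrib algebra_simps)
  finally have "2 * t * (\<epsilon> * norm x) \<le> 2 * t * (\<theta> \<bullet> x)" using h by (simp add: algebra_simps)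
  hence "\<epsilon> * norm x \<le> \<theta> \<bullet> x" using t0 by simp
  with x0 show ?thesis by simp
qed


definition lamf :: "real \<Rightarrow> real" where
  "lamf \<epsilon> = (if \<epsilon>\<^sup>2 \<le> 1/2 then \<epsilon> else 1 / (2 * \<epsilon>))"
definition radf :: "real \<Rightarrow> real" where
  "radf \<epsilon> = (if \<epsilon>\<^sup>2 \<le> 1/2 then sqrt (1 - \<epsilon>\<^sup>2) else 1 / (2 * \<epsilon>))"

lemma radf_bound:
  assumes e: "0 < \<epsilon>" "\<epsilon> < 1"
  shows "0 \<le> radf \<epsilon> \<and> radf \<epsilon> \<le> exp (- (\<epsilon>\<^sup>2 / 2))"
proof (cases "\<epsilon>\<^sup>2 \<le> 1/2")
  case True
  have q: "0 \<le> 1 - \<epsilon>\<^sup>2" using True by simp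
  have "1 - \<epsilon>\<^sup>2 \<le> exp (- \<epsilon>\<^sup>2)" using exp_ge_add_one_self[of "- \<epsilon>\<^sup>2"] by simp
  also have "exp (- \<epsilon>\<^sup>2) = (exp (- (\<epsilon>\<^sup>2 / 2)))^2"
    by (simp add: power2_eq_square exp_add[symmetric])
  finally have "(sqrt (1 - \<epsilon>\<^sup>2))^2 \<le> (exp (- (\<epsilon>\<^sup>2 / 2)))^2" using q by simp
  hence "sqrt (1 - \<epsilon>\<^sup>2) \<le> exp (- (\<epsilon>\<^sup>2 / 2))"
    by (rule power2_le_imp_le) simp
  then show ?thesis using True q by (simp add: radf_def)
next
  case False
  have e2: "\<epsilon>\<^sup>2 < \<epsilon>" using e by (simp add: power2_eq_square)
  have pos: "0 < 1 - \<epsilon>\<^sup>2 / 2" using e2 e by simp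
  have "1 - \<epsilon>\<^sup>2 / 2 \<le> exp (- (\<epsilon>\<^sup>2 / 2))" using exp_ge_add_one_self[of "- (\<epsilon>\<^sup>2/2)"] by simp
  have "0 \<le> (1 - \<epsilon>) * (\<epsilon>\<^sup>2 + \<epsilon> - 1)" using e False e2 by (intro mult_nonneg_nonneg) auto
  hence key: "1 \<le> 2 * \<epsilon> * (1 - \<epsilon>\<^sup>2 / 2)" by (simp add: power2_eq_square algebra_simps)
  have "1 / (2 * \<epsilon>) \<le> 1 - \<epsilon>\<^sup>2 / 2" using key e by (simp add: field_simps)
  also have "\<dots> \<le> exp (- (\<epsilon>\<^sup>2 / 2))" using exp_ge_add_one_self[of "- (\<epsilon>\<^sup>2/2)"] by simp
  finally show ?thesis using False e by (simp add: radf_def)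
qed

lemma cone_in_ball:
  fixes \<theta> x :: "'a::euclidean_space"
  assumes th: "norm \<theta> = 1" and e: "0 < \<epsilon>" "\<epsilon> < 1" and x0: "x \<noteq> 0"
    and ip: "\<epsilon> * norm x \<le> \<theta> \<bullet> x" and s: "0 < s" "s \<le> 1"
  shows "s *\<^sub>R \<theta> \<in> cball ((lamf \<epsilon> / norm x) *\<^sub>R x) (radf \<epsilon>)"
proof -
  define m where "m = norm x"
  have m0: "m > 0" using x0 by (simp add: m_def)
  have lam0: "lamf \<epsilon> > 0" using e by (simp add: lamf_def)
  have tht: "\<theta> \<bullet> \<theta> = 1" using th by (metis power2_norm_eq_inner one_power2)
  have xx: "x \<bullet> x = m^2" by (simp add: m_def power2_norm_eq_inner)
  have "(norm (s *\<^sub>R \<theta> - (lamf \<epsilon> / m) *\<^sub>R x))^2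
        = s^2 - 2 * s * lamf \<epsilon> * (\<theta> \<bullet> x) / m + (lamf \<epsilon>)^2"
  proof -
    define a where "a = lamf \<epsilon> / m"
    have "(norm (s *\<^sub>R \<theta> - a *\<^sub>R x))^2 = s^2 * (\<theta> \<bullet> \<theta>) - 2 * s * a * (\<theta> \<bullet> x) + a^2 * (x \<bullet> x)"
      unfolding power2_norm_eq_inner
      by (simp add: inner_diff_left inner_diff_right inner_commute power2_eq_square algebra_simps)
    also have "a^2 * (x \<bullet> x) = (lamf \<epsilon>)^2" using m0 by (simp add: a_def xx power_divide)
    also have "2 * s * a * (\<theta> \<bullet> x) = 2 * s * lamf \<epsilon> * (\<theta> \<bullet> x) / m" by (simp add: a_def)
    finally show ?thesis by (simp add: a_def tht)
  qed
  also have "\<dots> \<le> s^2 - 2 * s * lamf \<epsilon> * \<epsilon> + (lamf \<epsilon>)^2"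
  proof -
    have "\<epsilon> \<le> (\<theta> \<bullet> x) / m" using ip m0 by (simp add: m_def field_simps)
    hence "2 * s * lamf \<epsilon> * \<epsilon> \<le> 2 * s * lamf \<epsilon> * ((\<theta> \<bullet> x) / m)"
      using s lam0 by (intro mult_left_mono) auto
    thus ?thesis by simp
  qed
  also have "\<dots> \<le> (radf \<epsilon>)^2"
  proof (cases "\<epsilon>\<^sup>2 \<le> 1/2")
    case True
    have "(s - 1) * (s + 1 - 2 * \<epsilon>\<^sup>2) \<le> 0" using s True
      by (intro mult_nonpos_nonneg) auto
    hence p: "s^2 - 2 * s * \<epsilon> * \<epsilon> + \<epsilon>^2 \<le> 1 - \<epsilon>^2"
      by (simp add: power2_eq_square algebra_simps)
    have l1: "lamf \<epsilon> = \<epsilon>" using True by (simp add: lamf_def)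
    have l2: "(radf \<epsilon>)^2 = 1 - \<epsilon>^2" using True by (simp add: radf_def)
    show ?thesis unfolding l1 l2 using p .
  next
    case False
    have "s * s \<le> s" using s by (simp add: mult_le_cancel_left1)
    have l1: "lamf \<epsilon> = radf \<epsilon>" using False by (simp add: lamf_def radf_def)
    have l3: "2 * s * lamf \<epsilon> * \<epsilon> = s" using False e by (simp add: lamf_def)
    have l4: "(lamf \<epsilon>)^2 = (radf \<epsilon>)^2" by (simp add: l1)
    have l5: "s^2 = s * s" by (simp add: power2_eq_square)
    show ?thesis using l3 l4 l5 \<open>s * s \<le> s\<close> by linarith
  qed
  finally have "(norm (s *\<^sub>R \<theta> - (lamf \<epsilon> / m) *\<^sub>R x))^2 \<le> (radf \<epsilon>)^2" .
  moreover have r0: "0 \<le> radf \<epsilon>" using radf_bound[OF e] by simp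
  ultimately have "norm (s *\<^sub>R \<theta> - (lamf \<epsilon> / m) *\<^sub>R x) \<le> radf \<epsilon>"
    by (rule power2_le_imp_le)
  hence "dist (s *\<^sub>R \<theta>) ((lamf \<epsilon> / norm x) *\<^sub>R x) \<le> radf \<epsilon>"
    by (simp only: dist_norm m_def)
  thus ?thesis by (simp add: mem_cball dist_commute)
qed


lemma radial_le_iff:
  fixes K :: "'a::euclidean_space set" and \<theta> :: 'a
  assumes b: "bounded K" and k0: "0 \<in> K" and th: "\<theta> \<noteq> 0" and c: "0 \<le> c"
  shows "radial_fn K \<theta> \<le> c \<longleftrightarrow> (\<forall>t. t > c \<longrightarrow> t *\<^sub>R \<theta> \<notin> K)"
proof -
  define S where "S = {t. 0 \<le> t \<and> t *\<^sub>R \<theta> \<in> K}"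
  have ne: "S \<noteq> {}" using k0 by (auto simp: S_def intro!: exI[of _ 0])
  obtain B where B: "\<And>y. y \<in> K \<Longrightarrow> norm y \<le> B" using b by (auto simp: bounded_iff)
  have nt: "norm \<theta> > 0" using th by simp
  have "bdd_above S"
  proof (rule bdd_aboveI)
    fix t assume "t \<in> S"
    then have t0: "0 \<le> t" and tk: "t *\<^sub>R \<theta> \<in> K" by (auto simp: S_def)
    have "norm (t *\<^sub>R \<theta>) \<le> B" using B[OF tk] .
    then have "t * norm \<theta> \<le> B" using t0 by simp
    then show "t \<le> B / norm \<theta>" using nt by (simp add: field_simps)
  qed
  then have "Sup S \<le> c \<longleftrightarrow> (\<forall>t\<in>S. t \<le> c)" using ne by (simp add: cSup_le_iff)
  also have "\<dots> \<longleftrightarrow> (\<forall>t. t > c \<longrightarrow> t *\<^sub>R \<theta> \<notin> K)"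
  proof
    assume H: "\<forall>t\<in>S. t \<le> c"
    show "\<forall>t. t > c \<longrightarrow> t *\<^sub>R \<theta> \<notin> K"
    proof (intro allI impI)
      fix t assume "t > c"
      show "t *\<^sub>R \<theta> \<notin> K"
      proof
        assume "t *\<^sub>R \<theta> \<in> K"
        with \<open>t > c\<close> c have "t \<in> S" by (simp add: S_def)
        with H \<open>t > c\<close> show False by force
      qed
    qed
  next
    assume H: "\<forall>t. t > c \<longrightarrow> t *\<^sub>R \<theta> \<notin> K"
    show "\<forall>t\<in>S. t \<le> c"
    proof
      fix t assume "t \<in> S"
      then have "t *\<^sub>R \<theta> \<in> K" by (simp add: S_def)
      with H show "t \<le> c" by (meson not_le)
    qed
  qed
  finally show ?thesis by (simp add: radial_fn_def S_def)
qed

lemma exists_interior: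
  fixes K :: "'a::euclidean_space set" and \<theta> :: 'a
  assumes cv: "convex K" and k0: "0 \<in> interior K" and c: "0 \<le> c"
    and t: "t > c" and tk: "t *\<^sub>R \<theta> \<in> K"
  shows "\<exists>t'>c. t' *\<^sub>R \<theta> \<in> interior K"
proof -
  define t' where "t' = (c + t) / 2"
  define e where "e = 1 - t' / t"
  have t0: "t > 0" using c t by linarith
  have e0: "0 < e" using t c t0 by (simp add: e_def t'_def field_simps)
  have e1: "e \<le> 1" using t c t0 by (simp add: e_def t'_def field_simps)
  have "t *\<^sub>R \<theta> - e *\<^sub>R (t *\<^sub>R \<theta> - 0) \<in> interior K"
    by (rule mem_interior_convex_shrink[OF cv k0 tk e0 e1])
  moreover have "t *\<^sub>R \<theta> - e *\<^sub>R (t *\<^sub>R \<theta> - 0) = (t - e * t) *\<^sub>R \<theta>"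
    by (simp add: scaleR_diff_left)
  moreover have "t - e * t = t'" using t0 by (simp add: e_def algebra_simps)
  moreover have "t' > c" using t by (simp add: t'_def)
  ultimately show ?thesis by metis
qed


lemma covering_exists:
  fixes K :: "'a::euclidean_space set"
  assumes "compact K" "K \<noteq> {}"
  shows "\<exists>X. finite X \<and> card X = covering_number K (cball 0 1) \<and>
           K \<subseteq> (\<Union>x\<in>X. (\<lambda>y. x + y) ` cball 0 1) \<and> covering_number K (cball 0 1) \<ge> 1"
proof -
  define P where "P = (\<lambda>N. \<exists>X. finite X \<and> card X = N \<and> K \<subseteq> (\<Union>x\<in>X. (\<lambda>y. x + y) ` (cball (0::'a) 1)))"
  have sub: "ball x 1 \<subseteq> (\<lambda>y. x + y) ` cball 0 1" for x :: 'a
  proof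
    fix z assume "z \<in> ball x 1"
    then have "z - x \<in> cball 0 1" by (simp add: dist_norm norm_minus_commute)
    moreover have "z = x + (z - x)" by simp
    ultimately show "z \<in> (\<lambda>y. x + y) ` cball 0 1" by blast
  qed
  obtain D where D: "D \<subseteq> K" "finite D" "K \<subseteq> (\<Union>x\<in>D. ball x 1)"
    using compactE_image[OF assms(1), of K "\<lambda>x. ball x 1"] by force
  have "P (card D)" unfolding P_def
    using D sub by (intro exI[of _ D]) blast
  hence "P (LEAST N. P N)" by (rule LeastI)
  moreover have "covering_number K (cball 0 1) = (LEAST N. P N)"
    by (simp add: covering_number_def P_def)
  ultimately obtain X where X: "finite X" "card X = covering_number K (cball 0 1)"
    "K \<subseteq> (\<Union>x\<in>X. (\<lambda>y. x + y) ` cball 0 1)" unfolding P_def by metis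
  have "X \<noteq> {}" using X(3) assms(2) by auto
  hence "card X \<ge> 1" using X(1) by (simp add: Suc_le_eq card_gt_0_iff)
  with X show ?thesis by metis
qed


theorem proposition2p3:
  fixes K :: "'a::euclidean_space set" and \<epsilon> :: real
  assumes "convex K" and "compact K" and "0 \<in> interior K"
    and "0 < \<epsilon>" and "\<epsilon> < 1"
  shows "sphere_measure {\<theta> \<in> sphere 0 1. radial_fn K \<theta> \<le> 1 / sqrt (1 - \<epsilon>\<^sup>2)}
           \<ge> 1 - 2 * exp (ln (real (covering_number K (cball 0 1)))
                           - real DIM('a) * \<epsilon>\<^sup>2 / 2)"
proof -
  note cv = assms(1) and cp = assms(2) and k0i = assms(3) and e = assms(4,5)
  define c where "c = 1 / sqrt (1 - \<epsilon>\<^sup>2)"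
  define N where "N = covering_number K (cball 0 1)"
  define n where "n = DIM('a)"
  define R where "R = radf \<epsilon>"
  define Aset where "Aset = {\<theta> \<in> sphere (0::'a) 1. radial_fn K \<theta> \<le> c}"
  define C where "C = {t *\<^sub>R \<theta> | t \<theta>. 0 < t \<and> t \<le> 1 \<and> \<theta> \<in> Aset \<inter> sphere 0 1}"
  define V where "V = (\<Union>t\<in>{c<..}. {y::'a. y \<noteq> 0} \<inter> (\<lambda>y. (t / norm y) *\<^sub>R y) -` interior K)"
  have k0: "0 \<in> K" using k0i interior_subset by blast
  have bK: "bounded K" using cp compact_imp_bounded by blast
  have e21: "\<epsilon>\<^sup>2 \<le> 1" using e by (simp add: power_le_one)
  have c0: "0 \<le> c" unfolding c_def using e21 by simp
  obtain X where X: "finite X" "card X = N" "K \<subseteq> (\<Union>x\<in>X. (\<lambda>y. x + y) ` cball 0 1)" "N \<ge> 1"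
    using covering_exists[OF cp] k0 unfolding N_def by blast
  have openV: "open V" unfolding V_def
  proof (intro open_UN ballI continuous_open_preimage)
    fix t
    show "continuous_on {y::'a. y \<noteq> 0} (\<lambda>y. (t / norm y) *\<^sub>R y)"
      by (intro continuous_intros) auto
    show "open {y::'a. y \<noteq> 0}" by (simp add: open_Collect_neq)
    show "open (interior K)" by simp
  qed
  have Ceq: "C = (cball 0 1 - V) - {0}"
  proof
    show "C \<subseteq> (cball 0 1 - V) - {0}"
    proof
      fix y assume "y \<in> C"
      then obtain t \<theta> where y: "y = t *\<^sub>R \<theta>" "0 < t" "t \<le> 1" "norm \<theta> = 1" "radial_fn K \<theta> \<le> c"
        unfolding C_def Aset_def by auto
      have th0: "\<theta> \<noteq> 0" using y by auto
      have noK: "\<forall>s. s > c \<longrightarrow> s *\<^sub>R \<theta> \<notin> K"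
        using radial_le_iff[OF bK k0 th0 c0] y(5) by blast
      have ny: "norm y = t" using y by simp
      have "y \<notin> V"
      proof
        assume "y \<in> V"
        then obtain s where s: "s > c" "(s / norm y) *\<^sub>R y \<in> interior K" unfolding V_def by auto
        have "(s / norm y) *\<^sub>R y = s *\<^sub>R \<theta>" using ny y by simp
        with s interior_subset noK show False by auto
      qed
      then show "y \<in> (cball 0 1 - V) - {0}" using y ny by auto
    qed
  next
    show "(cball 0 1 - V) - {0} \<subseteq> C"
    proof
      fix y assume yy: "y \<in> (cball 0 1 - V) - {0}"
      define \<theta> where "\<theta> = (1 / norm y) *\<^sub>R y"
      have y0: "y \<noteq> 0" using yy by auto
      have nth: "norm \<theta> = 1" using y0 by (simp add: \<theta>_def)
      have th0: "\<theta> \<noteq> 0" using nth by auto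
      have yt: "y = norm y *\<^sub>R \<theta>" using y0 by (simp add: \<theta>_def)
      have "\<forall>s. s > c \<longrightarrow> s *\<^sub>R \<theta> \<notin> K"
      proof (intro allI impI notI)
        fix s assume s: "s > c" "s *\<^sub>R \<theta> \<in> K"
        obtain s' where s': "s' > c" "s' *\<^sub>R \<theta> \<in> interior K"
          using exists_interior[OF cv k0i c0 s] by blast
        have "(s' / norm y) *\<^sub>R y = s' *\<^sub>R \<theta>" by (simp add: \<theta>_def)
        hence "(s' / norm y) *\<^sub>R y \<in> interior K" using s' by simp
        hence "y \<in> V" unfolding V_def using s' y0 by blast
        thus False using yy by auto
      qed
      hence "radial_fn K \<theta> \<le> c" using radial_le_iff[OF bK k0 th0 c0] by blast
      hence "\<theta> \<in> Aset \<inter> sphere 0 1" using nth by (simp add: Aset_def)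
      moreover have "0 < norm y" "norm y \<le> 1" using yy y0 by auto
      ultimately show "y \<in> C" unfolding C_def using yt by blast
    qed
  qed
  have Cm: "C \<in> sets lebesgue" unfolding Ceq
  proof (rule sets.Diff)
    show "cball 0 1 - V \<in> sets lebesgue"
      by (metis borel_closed borel_open closed_cball openV sets.Diff sets_completionI_sets sets_lborel)
    show "{0} \<in> sets lebesgue"
      by (metis borel_closed closed_singleton sets_completionI_sets sets_lborel)
  qed
  define U where "U = (\<Union>x\<in>X. cball ((lamf \<epsilon> / norm x) *\<^sub>R x) R)"
  have cover: "cball 0 1 \<subseteq> C \<union> (cball 0 0 \<union> U)"
  proof
    fix y :: 'a assume yb: "y \<in> cball 0 1"
    show "y \<in> C \<union> (cball 0 0 \<union> U)"
    proof (cases "y = 0")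
      case True then show ?thesis by simp
    next
      case y0: False
      show ?thesis
      proof (cases "y \<in> V")
        case False
        then have "y \<in> C" unfolding Ceq using yb y0 by auto
        then show ?thesis by simp
      next
        case True
        then obtain t where t: "t > c" "(t / norm y) *\<^sub>R y \<in> interior K" unfolding V_def by auto
        define \<theta> where "\<theta> = (1 / norm y) *\<^sub>R y"
        have nth: "norm \<theta> = 1" using y0 by (simp add: \<theta>_def)
        have "t *\<^sub>R \<theta> \<in> K" using t interior_subset by (auto simp: \<theta>_def)
        then obtain x z where xz: "x \<in> X" "z \<in> cball 0 1" "t *\<^sub>R \<theta> = x + z" using X(3) by blast
        have "norm (t *\<^sub>R \<theta> - x) \<le> 1" using xz by (simp add: dist_norm)
        then have ci: "x \<noteq> 0 \<and> \<epsilon> * norm x \<le> \<theta> \<bullet> x"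
          using cap_ineq[OF nth e, of t x] t(1) unfolding c_def by blast
        have "norm y *\<^sub>R \<theta> \<in> cball ((lamf \<epsilon> / norm x) *\<^sub>R x) (radf \<epsilon>)"
          using cone_in_ball[OF nth e, of x "norm y"] ci y0 yb by auto
        moreover have "norm y *\<^sub>R \<theta> = y" using y0 by (simp add: \<theta>_def)
        ultimately have "y \<in> U" unfolding U_def R_def using xz(1) by auto
        then show ?thesis by simp
      qed
    qed
  qed
  have W: "cball 0 0 \<union> U \<in> sets lebesgue"
    unfolding U_def using X(1) by (intro sets.Un sets.finite_UN) auto
  have bW: "bounded (C \<union> (cball 0 0 \<union> U))"
    unfolding U_def Ceq using X(1) by auto
  have fm: "C \<union> (cball 0 0 \<union> U) \<in> lmeasurable"
    by (intro bounded_set_imp_lmeasurable bW sets.Un Cm W)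
  have Rb: "0 \<le> R" "R \<le> exp (- (\<epsilon>\<^sup>2 / 2))" using radf_bound[OF e] by (auto simp: R_def)
  define v where "v = unit_ball_vol (real n)"
  have vB: "measure lebesgue (cball (0::'a) 1) = v" by (simp add: content_cball v_def n_def)
  have vpos: "v > 0"
  proof -
    have "measure lborel (cball (0::'a) 1) > 0" by simp
    moreover have "measure lborel (cball (0::'a) 1) = v" by (simp add: content_cball v_def n_def)
    ultimately show ?thesis by simp
  qed
  have "v \<le> measure lebesgue (C \<union> (cball 0 0 \<union> U))"
    unfolding vB[symmetric] by (rule measure_mono_fmeasurable[OF cover _ fm]) simp
  also have "\<dots> \<le> measure lebesgue C + measure lebesgue (cball 0 0 \<union> U)"
    by (rule measure_Un_le[OF Cm W])
  also have "measure lebesgue (cball 0 0 \<union> U) \<le> measure lebesgue (cball (0::'a) 0) + measure lebesgue U"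
    unfolding U_def using X(1) by (intro measure_Un_le sets.finite_UN) auto
  also have "measure lebesgue (cball (0::'a) 0) = 0" by (simp add: content_cball)
  also have "measure lebesgue U \<le> (\<Sum>x\<in>X. measure lebesgue (cball ((lamf \<epsilon> / norm x) *\<^sub>R x) R))"
    unfolding U_def using X(1) by (intro measure_UNION_le) auto
  also have "\<dots> = real N * (v * R ^ n)"
    using Rb X(2) by (simp add: content_cball v_def n_def)
  finally have main: "v - real N * (v * R ^ n) \<le> measure lebesgue C" by linarith
  have "R ^ n \<le> exp (- (\<epsilon>\<^sup>2 / 2)) ^ n" using Rb by (intro power_mono) auto
  also have "\<dots> = exp (- (real n * \<epsilon>\<^sup>2 / 2))" by (simp add: exp_of_nat_mult[symmetric])
  finally have Rn: "R ^ n \<le> exp (- (real n * \<epsilon>\<^sup>2 / 2))" .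
  have Npos: "real N > 0" using X(4) by simp
  have eq2: "2 * exp (ln (real N) - real n * \<epsilon>\<^sup>2 / 2) = 2 * (real N * exp (- (real n * \<epsilon>\<^sup>2 / 2)))"
  proof -
    have "exp (ln (real N) - real n * \<epsilon>\<^sup>2 / 2) = exp (ln (real N)) * exp (- (real n * \<epsilon>\<^sup>2 / 2))"
      by (simp add: exp_add[symmetric])
    also have "exp (ln (real N)) = real N" using Npos by simp
    finally show ?thesis by simp
  qed
  have r1: "real N * R ^ n \<le> real N * exp (- (real n * \<epsilon>\<^sup>2 / 2))"
    by (rule mult_left_mono[OF Rn]) simp
  have r2: "0 \<le> real N * exp (- (real n * \<epsilon>\<^sup>2 / 2))" by simp
  have bound: "1 - 2 * exp (ln (real N) - real n * \<epsilon>\<^sup>2 / 2) \<le> 1 - real N * R ^ n"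
    using eq2 r1 r2 by linarith
  have m2: "(1 - real N * R ^ n) * v \<le> measure lebesgue C"
    using main by (simp add: algebra_simps)
  have "1 - real N * R ^ n \<le> measure lebesgue C / v"
    using m2 vpos by (simp add: pos_le_divide_eq)
  also have "measure lebesgue C / v = sphere_measure Aset"
    unfolding sphere_measure_def C_def vB ..
  finally show ?thesis using bound unfolding Aset_def c_def N_def n_def by linarith
qed

end
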